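(* Let $n\ge 4$ and for each $k\in\mathbb{N}$ let $w_k$ be the word $01\cdots(n-1)$. Then the sequence of pointed $I_n$-sets $(I_n(w_k))_{k\in\mathbb{N}}$ does not have the Ramsey property.
   Context: $I_n$ is the monoid under composition of all $f\colon\{0,\dots,n-1\}\to\{0,\dots,n-1\}$ with $f(0)=0$ and $f(i-1)\le f(i)\le f(i-1)+1$ for $0<i<n$. For a finite word $w$ over the alphabet $\{0,\dots,n-1\}$ containing the letter $n-1$, and $f\in I_n$, $f(w)$ is the word obtained by applying $f$ letter by letter; $I_n(w)=\{f(w):f\in I_n\}$ with the action $g\cdot f(w)=(g\circ f)(w)$ and distinguished element $w$ is a pointed $I_n$-set. A pointed $M$-set is an $M$-set $X$ with a distinguished point $x$ with $Mx=X$. For a sequence of sets $(X_k)$, $\langle(X_k)\rangle$ is the set of finite sequences $x_1\cdots x_r$ with $x_i\in X_{m_i}$ for some $m_1<\cdots<m_r$, a partial semigroup under concatenation (product defined iff the index sets can be chosen with all indices of the first before all indices of the second); $M$ acts coordinatewise. A sequence $(u_i)$ is basic if $u_{i_1}\cdots u_{i_r}$ is defined for all $i_1<\cdots<i_r$. $(X_k)$ has the Ramsey property if for every finite coloring of $\langle(X_k)\rangle$ there is a basic sequence $(u_i)$ such that each $u_i$ has as an entry the distinguished element of the relevant $X_k$, and all words $a_0(u_{i_0})\cdots a_l(u_{i_l})$ with $i_0<\cdots<i_l$, $a_j\in M$, at least one $a_j=1_M$, have the same color. *)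

theory Defs
  imports Main
begin

text \<open>The monoid I_n. Elements are functions on {0..n-1}; to make equality
  (in particular equality with the unit id) extensional, we fix them to be the
  identity outside {0..n-1}.\<close>
definition In :: "nat \<Rightarrow> (nat \<Rightarrow> nat) set" where
  "In n = {f. f 0 = 0
              \<and> (\<forall>i. 0 < i \<and> i < n \<longrightarrow> f (i - 1) \<le> f i \<and> f i \<le> f (i - 1) + 1)
              \<and> (\<forall>i\<ge>n. f i = i)}"

definition In_orbit :: "nat \<Rightarrow> nat list \<Rightarrow> nat list set" where
  "In_orbit n w = (\<lambda>f. map f w) ` In n"

text \<open>The partial semigroup of finite (nonempty) sequences x_1...x_r with
  x_i in X (m_i) for some m_1 < ... < m_r.\<close>
definition FIN_seq :: "(nat \<Rightarrow> 'x set) \<Rightarrow> 'x list set" where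
  "FIN_seq X = {xs. xs \<noteq> [] \<and> (\<exists>m. strict_mono m \<and> (\<forall>j<length xs. xs ! j \<in> X (m j)))}"

definition prod_defined :: "(nat \<Rightarrow> 'x set) \<Rightarrow> 'x list \<Rightarrow> 'x list \<Rightarrow> bool" where
  "prod_defined X xs ys \<longleftrightarrow> xs \<in> FIN_seq X \<and> ys \<in> FIN_seq X \<and>
     (\<exists>m. strict_mono m \<and> (\<forall>j<length (xs @ ys). (xs @ ys) ! j \<in> X (m j)))"

definition basic_seq :: "(nat \<Rightarrow> 'x set) \<Rightarrow> (nat \<Rightarrow> 'x list) \<Rightarrow> bool" where
  "basic_seq X u \<longleftrightarrow> (\<forall>r idx. 1 \<le> r \<and> strict_mono (idx :: nat \<Rightarrow> nat) \<longrightarrow>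
       concat (map (\<lambda>j. u (idx j)) [0..<r]) \<in> FIN_seq X)"

definition has_point :: "(nat \<Rightarrow> 'x set) \<Rightarrow> (nat \<Rightarrow> 'x) \<Rightarrow> 'x list \<Rightarrow> bool" where
  "has_point X pt xs \<longleftrightarrow> (\<exists>m. strict_mono m \<and> (\<forall>j<length xs. xs ! j \<in> X (m j))
       \<and> (\<exists>j<length xs. xs ! j = pt (m j)))"

text \<open>Ramsey property for a sequence (X_k) of pointed M-sets (points pt k), where
  the monoid M (carrier, unit one) acts by act; the action on sequences is coordinatewise.\<close>
definition ramsey_property ::
  "'m set \<Rightarrow> 'm \<Rightarrow> ('m \<Rightarrow> 'x \<Rightarrow> 'x) \<Rightarrow> (nat \<Rightarrow> 'x set) \<Rightarrow> (nat \<Rightarrow> 'x) \<Rightarrow> bool" where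
  "ramsey_property M one act X pt \<longleftrightarrow>
     (\<forall>c :: 'x list \<Rightarrow> nat. (\<exists>r. \<forall>x\<in>FIN_seq X. c x < r) \<longrightarrow>
        (\<exists>u col. (\<forall>i. u i \<in> FIN_seq X \<and> has_point X pt (u i)) \<and> basic_seq X u \<and>
           (\<forall>l idx a. strict_mono (idx :: nat \<Rightarrow> nat) \<and> (\<forall>j\<le>l. a j \<in> M) \<and> (\<exists>j\<le>l. a j = one)
              \<longrightarrow> c (concat (map (\<lambda>j. map (act (a j)) (u (idx j))) [0..<Suc l])) = col)))"

end

theory Submission
  imports Defs
begin

lemma In_step_bound:
  assumes f: "f \<in> In n" and ij: "i \<le> j" and jn: "j < n"
  shows "f j \<le> f i + (j - i)"
  using ij jn
proof (induction j)
  case 0 then show ?case by simp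
next
  case (Suc j)
  show ?case
  proof (cases "i = Suc j")
    case True then show ?thesis by simp
  next
    case False
    with Suc.prems have "i \<le> j" "j < n" by auto
    with Suc.IH have ih: "f j \<le> f i + (j - i)" by blast
    from f Suc.prems have "f (Suc j - 1) \<le> f (Suc j) \<and> f (Suc j) \<le> f (Suc j - 1) + 1"
      unfolding In_def by auto
    then have "f (Suc j) \<le> f j + 1" by simp
    with ih \<open>i \<le> j\<close> show ?thesis by linarith
  qed
qed

lemma In_le: "f \<in> In n \<Longrightarrow> j < n \<Longrightarrow> f j \<le> j"
  using In_step_bound[of f n 0 j] by (simp add: In_def)

lemma In_top: "f \<in> In n \<Longrightarrow> 2 \<le> n \<Longrightarrow> f (n - 1) = n - 1 \<Longrightarrow> f 1 = 1"
proof -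
  assume a: "f \<in> In n" "2 \<le> n" "f (n - 1) = n - 1"
  have "f (n - 1) \<le> f 1 + (n - 1 - 1)" using In_step_bound[OF a(1), of 1 "n - 1"] a(2) by simp
  moreover have "f 1 \<le> 1" using In_le[OF a(1), of 1] a(2) by simp
  ultimately show "f 1 = 1" using a by linarith
qed

definition g1 :: "nat \<Rightarrow> nat \<Rightarrow> nat" where
  "g1 n k = (if k = 0 then 0 else if k < n then k - 1 else k)"

definition g2 :: "nat \<Rightarrow> nat \<Rightarrow> nat" where
  "g2 n k = (if k = 0 then 0 else if k = 1 then 1 else if k < n then k - 1 else k)"

lemma g1_In: "g1 n \<in> In n"
  unfolding In_def g1_def by auto

lemma g2_In: "g2 n \<in> In n"
  unfolding In_def g2_def by auto

definition colr :: "nat \<Rightarrow> nat list list \<Rightarrow> nat" where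
  "colr n xs = (let ys = filter (\<lambda>v. n - 2 \<le> v ! (n - 1)) xs in
     if ys \<noteq> [] \<and> last ys ! 1 = 0 then 1 else 0)"

theorem corollary4p7:
  fixes n :: nat
  assumes "n \<ge> 4"
  shows "\<not> ramsey_property (In n) id (\<lambda>f x. map f x)
            (\<lambda>k. In_orbit n [0..<n]) (\<lambda>k. [0..<n])"
proof
  assume R: "ramsey_property (In n) id (\<lambda>f x. map f x)
            (\<lambda>k. In_orbit n [0..<n]) (\<lambda>k. [0..<n])"
  have bd: "\<exists>r. \<forall>x\<in>FIN_seq (\<lambda>k. In_orbit n [0..<n]). colr n x < r"
    by (rule exI[of _ 2]) (simp add: colr_def Let_def)
  from R bd obtain u col where
    uF: "\<forall>i. u i \<in> FIN_seq (\<lambda>k. In_orbit n [0..<n]) \<and>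
            has_point (\<lambda>k. In_orbit n [0..<n]) (\<lambda>k. [0..<n]) (u i)" and
    hom: "\<forall>l idx a. strict_mono (idx :: nat \<Rightarrow> nat) \<and> (\<forall>j\<le>l. a j \<in> In n) \<and> (\<exists>j\<le>l. a j = id)
              \<longrightarrow> colr n (concat (map (\<lambda>j. map (map (a j)) (u (idx j))) [0..<Suc l])) = col"
    unfolding ramsey_property_def by blast
  define P where "P = (\<lambda>v::nat list. n - 2 \<le> v ! (n - 1))"
  have idIn: "id \<in> In n" unfolding In_def by auto
  have ent: "\<And>v. v \<in> set (u 1) \<Longrightarrow> \<exists>f\<in>In n. v = map f [0..<n]"
  proof -
    fix v assume "v \<in> set (u 1)"
    then obtain j where j: "j < length (u 1)" "u 1 ! j = v" by (auto simp: in_set_conv_nth)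
    from uF have "u 1 \<in> FIN_seq (\<lambda>k. In_orbit n [0..<n])" by blast
    with j show "\<exists>f\<in>In n. v = map f [0..<n]"
      unfolding FIN_seq_def In_orbit_def by auto
  qed
  have full: "[0..<n] \<in> set (u 1)"
  proof -
    from uF have "has_point (\<lambda>k. In_orbit n [0..<n]) (\<lambda>k. [0..<n]) (u 1)" by blast
    then show ?thesis unfolding has_point_def by (auto simp: in_set_conv_nth)
  qed
  have n1: "n - 1 < n" "1 < n" using assms by auto
  have comb: "\<And>g. g \<in> In n \<Longrightarrow>
     colr n (map (map id) (u 0) @ map (map g) (u 1)) = col"
  proof -
    fix g assume g: "g \<in> In n"
    have "colr n (concat (map (\<lambda>j. map (map ((\<lambda>j. if j = 0 then id else g) j)) (u (id j))) [0..<Suc 1])) = col"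
    proof (rule hom[rule_format, of id 1 "\<lambda>j. if j = 0 then id else g"], intro conjI)
      show "strict_mono (id :: nat \<Rightarrow> nat)" by (simp add: strict_mono_def)
      show "\<forall>j\<le>(1::nat). (if j = 0 then id else g) \<in> In n" using g idIn by auto
      show "\<exists>j\<le>(1::nat). (if j = 0 then id else g) = id" by (rule exI[where x=0]) simp
    qed
    then show "colr n (map (map id) (u 0) @ map (map g) (u 1)) = col"
      by (simp add: upt_rec)
  qed
  have lastB: "\<And>A B. filter P B \<noteq> [] \<Longrightarrow> last (filter P (A @ B)) = last (filter P B)"
    by simp
  have c1: "colr n (map (map id) (u 0) @ map (map (g1 n)) (u 1)) = 1"
  proof -
    let ?B = "map (map (g1 n)) (u 1)"
    have "map (g1 n) [0..<n] \<in> set ?B" using full by auto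
    moreover have "P (map (g1 n) [0..<n])" using assms unfolding P_def g1_def by auto
    ultimately have ne: "filter P ?B \<noteq> []" by (auto simp: filter_empty_conv)
    then have "last (filter P ?B) \<in> set ?B" using last_in_set by fastforce
    then obtain v where v: "v \<in> set (u 1)" "last (filter P ?B) = map (g1 n) v" by auto
    from ent[OF v(1)] obtain f where f: "f \<in> In n" "v = map f [0..<n]" by blast
    have "f 1 \<le> 1" using In_le[OF f(1) n1(2)] .
    then have "map (g1 n) v ! 1 = 0" using f(2) n1 by (auto simp: g1_def)
    then show ?thesis using ne v(2) lastB[of ?B] unfolding colr_def P_def[symmetric]
      by (simp add: Let_def)
  qed
  have c2: "colr n (map (map id) (u 0) @ map (map (g2 n)) (u 1)) = 0"
  proof -
    let ?B = "map (map (g2 n)) (u 1)"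
    have "map (g2 n) [0..<n] \<in> set ?B" using full by auto
    moreover have "P (map (g2 n) [0..<n])" using assms unfolding P_def g2_def by auto
    ultimately have ne: "filter P ?B \<noteq> []" by (auto simp: filter_empty_conv)
    then have lin: "last (filter P ?B) \<in> set (filter P ?B)" using last_in_set by blast
    then obtain v where v: "v \<in> set (u 1)" "last (filter P ?B) = map (g2 n) v" by auto
    from lin v have Pv: "P (map (g2 n) v)" by simp
    from ent[OF v(1)] obtain f where f: "f \<in> In n" "v = map f [0..<n]" by blast
    have le: "f (n - 1) \<le> n - 1" using In_le[OF f(1) n1(1)] .
    from Pv f(2) n1 have "n - 2 \<le> g2 n (f (n - 1))" unfolding P_def by simp
    with le assms have "f (n - 1) = n - 1" unfolding g2_def
      by (auto split: if_splits; linarith)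
    with In_top[OF f(1)] assms have "f 1 = 1" by simp
    then have "map (g2 n) v ! 1 = 1" using f(2) n1 by (auto simp: g2_def)
    then show ?thesis using ne v(2) lastB[of ?B] unfolding colr_def P_def[symmetric]
      by (simp add: Let_def)
  qed
  from comb[OF g1_In] comb[OF g2_In] c1 c2 show False by simp
qed

end
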